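(* Let $\mathcal{G}$ be a finite groupoid and let $\mathcal{H}$ and $\mathcal{K}$ be connected wide subgroupoids of $\mathcal{G}$. Then there exists an isomorphism of $\mathbb{C}$-vector spaces \[\mathbb{C}_{\mathcal{H}\backslash\mathcal{G}/\mathcal{K}}\cong \mathrm{Nat}(Y_\mathcal{H},Y_\mathcal{K}),\] where $\mathrm{Nat}(Y_\mathcal{H},Y_\mathcal{K})$ denotes the vector space of natural transformations $Y_\mathcal{H}\Rightarrow Y_\mathcal{K}$ between functors $\mathcal{G}\to\mathbf{Vect}_\mathbb{C}$.
   Context: A groupoid is a category in which every morphism is invertible; all groupoids are finite and nonempty; $\mathcal{C}_0,\mathcal{C}_1$ denote objects and morphisms, and $gg'$ denotes composition $g\circ g'$. A subgroupoid is a subcategory that is a groupoid; it is wide if it contains all objects, connected if any two of its objects are joined by a morphism of it. Define \[\mathbb{C}_{\mathcal{H}\backslash\mathcal{G}/\mathcal{K}}:=\{\phi:\mathcal{G}_1\to\mathbb{C}\mid \phi(h^{-1}gk)=\phi(g)\text{ for all }h\in\mathcal{H}_1,g\in\mathcal{G}_1,k\in\mathcal{K}_1\text{ with }\mathrm{cod}\,h=\mathrm{cod}\,g,\ \mathrm{dom}\,g=\mathrm{cod}\,k\},\] a vector space under pointwise operations. For an object $G$ let $\mathrm{Mor}_\mathcal{G}(-,G):=\coprod_{G'\in\mathcal{G}_0}\mathcal{G}(G',G)$. For a subgroupoid $\mathcal{H}$, the functor $Y_\mathcal{H}:\mathcal{G}\to\mathbf{Vect}_\mathbb{C}$ is given on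 objects by $Y_\mathcal{H}(G):=\{f:\mathrm{Mor}_\mathcal{G}(-,G)\to\mathbb{C}\mid f(gh)=f(g)\text{ for all } g\in\mathrm{Mor}_\mathcal{G}(-,G),\ h\in\mathcal{H}_1 \text{ with } \mathrm{dom}\,g=\mathrm{cod}\,h\}$ (pointwise vector space structure), and on a morphism $g:G\to G'$ by $Y_\mathcal{H}(g)(f):=f(g^{-1}\,-)$, i.e. $x\mapsto f(g^{-1}x)$ for $x\in\mathrm{Mor}_\mathcal{G}(-,G')$. *)

theory Defs
  imports Complex_Main
begin

text \<open>A (small) category presented concretely: a set of objects, a set of morphisms,
  domain, codomain, composition (gcomp g g' is g \<circ> g', defined when gdom g = gcod g')
  and identities.\<close>
record ('o, 'm) groupoid =
  gobj :: "'o set"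
  gmor :: "'m set"
  gdom :: "'m \<Rightarrow> 'o"
  gcod :: "'m \<Rightarrow> 'o"
  gcomp :: "'m \<Rightarrow> 'm \<Rightarrow> 'm"
  gid :: "'o \<Rightarrow> 'm"

definition is_finite_groupoid :: "('o, 'm) groupoid \<Rightarrow> bool" where
  "is_finite_groupoid C \<longleftrightarrow>
     finite (gobj C) \<and> finite (gmor C) \<and> gobj C \<noteq> {} \<and>
     (\<forall>g\<in>gmor C. gdom C g \<in> gobj C \<and> gcod C g \<in> gobj C) \<and>
     (\<forall>A\<in>gobj C. gid C A \<in> gmor C \<and> gdom C (gid C A) = A \<and> gcod C (gid C A) = A) \<and>
     (\<forall>g\<in>gmor C. \<forall>g'\<in>gmor C. gdom C g = gcod C g' \<longrightarrow>
        gcomp C g g' \<in> gmor C \<and> gdom C (gcomp C g g') = gdom C g' \<and>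
        gcod C (gcomp C g g') = gcod C g) \<and>
     (\<forall>f\<in>gmor C. \<forall>g\<in>gmor C. \<forall>h\<in>gmor C. gdom C f = gcod C g \<longrightarrow> gdom C g = gcod C h \<longrightarrow>
        gcomp C f (gcomp C g h) = gcomp C (gcomp C f g) h) \<and>
     (\<forall>g\<in>gmor C. gcomp C (gid C (gcod C g)) g = g \<and> gcomp C g (gid C (gdom C g)) = g) \<and>
     (\<forall>g\<in>gmor C. \<exists>g'\<in>gmor C. gdom C g' = gcod C g \<and> gcod C g' = gdom C g \<and>
        gcomp C g g' = gid C (gcod C g) \<and> gcomp C g' g = gid C (gdom C g))"

definition ginv :: "('o, 'm) groupoid \<Rightarrow> 'm \<Rightarrow> 'm" where
  "ginv C g = (SOME g'. g' \<in> gmor C \<and> gdom C g' = gcod C g \<and> gcod C g' = gdom C g \<and>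
        gcomp C g g' = gid C (gcod C g) \<and> gcomp C g' g = gid C (gdom C g))"

definition wide_subgroupoid :: "('o, 'm) groupoid \<Rightarrow> 'm set \<Rightarrow> bool" where
  "wide_subgroupoid C H \<longleftrightarrow> H \<subseteq> gmor C \<and>
     (\<forall>A\<in>gobj C. gid C A \<in> H) \<and>
     (\<forall>h\<in>H. \<forall>h'\<in>H. gdom C h = gcod C h' \<longrightarrow> gcomp C h h' \<in> H) \<and>
     (\<forall>h\<in>H. ginv C h \<in> H)"

definition connected_wide :: "('o, 'm) groupoid \<Rightarrow> 'm set \<Rightarrow> bool" where
  "connected_wide C H \<longleftrightarrow> (\<forall>A\<in>gobj C. \<forall>B\<in>gobj C. \<exists>h\<in>H. gdom C h = A \<and> gcod C h = B)"

text \<open>Double-coset functions C_{H\G/K}; functions are taken to be 0 off the morphisms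
  (so that they are exactly functions on G_1).\<close>
definition double_coset_fns :: "('o, 'm) groupoid \<Rightarrow> 'm set \<Rightarrow> 'm set \<Rightarrow> ('m \<Rightarrow> complex) set" where
  "double_coset_fns C H K = {\<phi>. (\<forall>m. m \<notin> gmor C \<longrightarrow> \<phi> m = 0) \<and>
     (\<forall>h\<in>H. \<forall>g\<in>gmor C. \<forall>k\<in>K. gcod C h = gcod C g \<longrightarrow> gdom C g = gcod C k \<longrightarrow>
        \<phi> (gcomp C (ginv C h) (gcomp C g k)) = \<phi> g)}"

definition Yobj :: "('o, 'm) groupoid \<Rightarrow> 'm set \<Rightarrow> 'o \<Rightarrow> ('m \<Rightarrow> complex) set" where
  "Yobj C H G = {f. (\<forall>x. \<not> (x \<in> gmor C \<and> gcod C x = G) \<longrightarrow> f x = 0) \<and>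
     (\<forall>g\<in>gmor C. \<forall>h\<in>H. gcod C g = G \<longrightarrow> gdom C g = gcod C h \<longrightarrow> f (gcomp C g h) = f g)}"

definition Ymor :: "('o, 'm) groupoid \<Rightarrow> 'm \<Rightarrow> ('m \<Rightarrow> complex) \<Rightarrow> ('m \<Rightarrow> complex)" where
  "Ymor C g f = (\<lambda>x. if x \<in> gmor C \<and> gcod C x = gcod C g then f (gcomp C (ginv C g) x) else 0)"

text \<open>For a unique representation the
  family is 0 at non-objects and each component is 0 outside Y_H(G).\<close>
definition nat_trans :: "('o, 'm) groupoid \<Rightarrow> 'm set \<Rightarrow> 'm set \<Rightarrow>
    ('o \<Rightarrow> ('m \<Rightarrow> complex) \<Rightarrow> ('m \<Rightarrow> complex)) set" where
  "nat_trans C H K = {\<eta>.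
     (\<forall>G. G \<notin> gobj C \<longrightarrow> (\<forall>f. \<eta> G f = (\<lambda>m. 0))) \<and>
     (\<forall>G\<in>gobj C. (\<forall>f. f \<notin> Yobj C H G \<longrightarrow> \<eta> G f = (\<lambda>m. 0)) \<and>
        (\<forall>f\<in>Yobj C H G. \<eta> G f \<in> Yobj C K G) \<and>
        (\<forall>a. \<forall>f1\<in>Yobj C H G. \<forall>f2\<in>Yobj C H G.
            \<eta> G (\<lambda>m. a * f1 m + f2 m) = (\<lambda>m. a * \<eta> G f1 m + \<eta> G f2 m))) \<and>
     (\<forall>g\<in>gmor C. \<forall>f\<in>Yobj C H (gdom C g).
        \<eta> (gcod C g) (Ymor C g f) = Ymor C g (\<eta> (gdom C g) f))}"

end

theory Submission
  imports Defs
begin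

locale GG =
  fixes C :: "('o, 'm) groupoid" and H K :: "'m set"
  assumes fin: "is_finite_groupoid C"
    and wH: "wide_subgroupoid C H" and cH: "connected_wide C H"
    and wK: "wide_subgroupoid C K"
begin

abbreviation "M \<equiv> gmor C"
abbreviation "Ob \<equiv> gobj C"
abbreviation "dm \<equiv> gdom C"
abbreviation "cd \<equiv> gcod C"
abbreviation "cp \<equiv> gcomp C"
abbreviation "iv \<equiv> ginv C"
abbreviation "gi \<equiv> gid C"

lemma finM: "finite M" using fin by (simp add: is_finite_groupoid_def)
lemma Oneq: "Ob \<noteq> {}" using fin by (simp add: is_finite_groupoid_def)
lemma dm_O: "g \<in> M \<Longrightarrow> dm g \<in> Ob" using fin by (simp add: is_finite_groupoid_def)
lemma cd_O: "g \<in> M \<Longrightarrow> cd g \<in> Ob" using fin by (simp add: is_finite_groupoid_def)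
lemma id_M: "A \<in> Ob \<Longrightarrow> gi A \<in> M \<and> dm (gi A) = A \<and> cd (gi A) = A"
  using fin by (simp add: is_finite_groupoid_def)
lemma cp_M: "g \<in> M \<Longrightarrow> g' \<in> M \<Longrightarrow> dm g = cd g' \<Longrightarrow>
   cp g g' \<in> M \<and> dm (cp g g') = dm g' \<and> cd (cp g g') = cd g"
  using fin by (simp add: is_finite_groupoid_def)
lemma assoc: "f \<in> M \<Longrightarrow> g \<in> M \<Longrightarrow> h \<in> M \<Longrightarrow> dm f = cd g \<Longrightarrow> dm g = cd h \<Longrightarrow>
   cp f (cp g h) = cp (cp f g) h"
  using fin unfolding is_finite_groupoid_def by blast
lemma idl: "g \<in> M \<Longrightarrow> cp (gi (cd g)) g = g"
  using fin by (simp add: is_finite_groupoid_def)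
lemma idr: "g \<in> M \<Longrightarrow> cp g (gi (dm g)) = g"
  using fin by (simp add: is_finite_groupoid_def)

lemma inv_props: assumes "g \<in> M"
  shows "iv g \<in> M \<and> dm (iv g) = cd g \<and> cd (iv g) = dm g \<and>
    cp g (iv g) = gi (cd g) \<and> cp (iv g) g = gi (dm g)"
proof -
  from fin assms obtain g' where "g' \<in> M \<and> dm g' = cd g \<and> cd g' = dm g \<and>
    cp g g' = gi (cd g) \<and> cp g' g = gi (dm g)"
    unfolding is_finite_groupoid_def by blast
  then show ?thesis unfolding ginv_def by (rule someI)
qed

lemma cancl: "y \<in> M \<Longrightarrow> z \<in> M \<Longrightarrow> cd z = cd y \<Longrightarrow> cp y (cp (iv y) z) = z"
  using assoc[of y "iv y" z] inv_props[of y] idl[of z] by simp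

lemma cancl2: "y \<in> M \<Longrightarrow> z \<in> M \<Longrightarrow> dm y = cd z \<Longrightarrow> cp (iv y) (cp y z) = z"
  using assoc[of "iv y" y z] inv_props[of y] idl[of z] by simp

lemma inv_unique: assumes "g \<in> M" "g' \<in> M" "dm g' = cd g" "cd g' = dm g" "cp g g' = gi (cd g)"
  shows "g' = iv g"
proof -
  have "g' = cp (iv g) (cp g g')" using cancl2[of g g'] assms by simp
  also have "\<dots> = cp (iv g) (gi (dm (iv g)))" using assms inv_props[of g] by simp
  also have "\<dots> = iv g" using idr inv_props[of g] assms by blast
  finally show ?thesis .
qed

lemma inv_inv: "g \<in> M \<Longrightarrow> iv (iv g) = g"
  using inv_unique[of "iv g" g] inv_props[of g] by simp

lemma inv_comp: assumes "a \<in> M" "b \<in> M" "dm a = cd b"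
  shows "iv (cp a b) = cp (iv b) (iv a)"
proof -
  have ab: "cp a b \<in> M" "cd (cp a b) = cd a" "dm (cp a b) = dm b" using cp_M assms by auto
  have bi: "cp (iv b) (iv a) \<in> M" "dm (cp (iv b) (iv a)) = cd a" "cd (cp (iv b) (iv a)) = dm b"
    using cp_M[of "iv b" "iv a"] inv_props[of a] inv_props[of b] assms by auto
  have "cp (cp a b) (cp (iv b) (iv a)) = cp a (cp b (cp (iv b) (iv a)))"
    using assoc[of a b "cp (iv b) (iv a)"] assms bi by simp
  also have "\<dots> = cp a (iv a)" using cancl[of b "iv a"] assms inv_props[of a] by simp
  also have "\<dots> = gi (cd (cp a b))" using inv_props[of a] assms ab by simp
  finally show ?thesis using inv_unique[of "cp a b" "cp (iv b) (iv a)"] ab bi by simp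
qed

lemma inv_id: "A \<in> Ob \<Longrightarrow> iv (gi A) = gi A"
  using inv_unique[of "gi A" "gi A"] id_M[of A] idl[of "gi A"] by simp

lemma subH: "h \<in> H \<Longrightarrow> h \<in> M" "A \<in> Ob \<Longrightarrow> gi A \<in> H"
  "h \<in> H \<Longrightarrow> h' \<in> H \<Longrightarrow> dm h = cd h' \<Longrightarrow> cp h h' \<in> H" "h \<in> H \<Longrightarrow> iv h \<in> H"
  using wH unfolding wide_subgroupoid_def by auto
lemma subK: "h \<in> K \<Longrightarrow> h \<in> M" "A \<in> Ob \<Longrightarrow> gi A \<in> K"
  "h \<in> K \<Longrightarrow> h' \<in> K \<Longrightarrow> dm h = cd h' \<Longrightarrow> cp h h' \<in> K" "h \<in> K \<Longrightarrow> iv h \<in> K"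
  using wK unfolding wide_subgroupoid_def by auto


lemma cancr: "g \<in> M \<Longrightarrow> h \<in> M \<Longrightarrow> dm g = cd h \<Longrightarrow> cp (cp g h) (iv h) = g"
  using assoc[of g h "iv h"] inv_props[of h] idr[of g] by simp

definition "HA A = {h\<in>H. cd h = A}"
definition "NN = card (HA (SOME A. A \<in> Ob))"
definition "delta A = (\<lambda>m. if m \<in> H \<and> cd m = A then (1::complex) else 0)"

lemma HA_fin: "finite (HA A)"
  using finM subH(1) by (auto simp: HA_def intro: finite_subset)

lemma HA_img: assumes "k \<in> H" shows "HA (cd k) = cp k ` HA (dm k)"
proof -
  have kM: "k \<in> M" using subH(1) assms by blast
  show ?thesis
proof
  show "HA (cd k) \<subseteq> cp k ` HA (dm k)"
  proof
    fix h assume h: "h \<in> HA (cd k)"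
    hence hh: "h \<in> H" "cd h = cd k" by (auto simp: HA_def)
    have hM: "h \<in> M" using subH(1) hh by blast
    have ik: "iv k \<in> H" "dm (iv k) = cd k" "cd (iv k) = dm k" using subH(4)[OF assms] inv_props[OF kM] by auto
    have "cp (iv k) h \<in> H" using subH(3)[OF ik(1) hh(1)] ik hh by simp
    moreover have "cd (cp (iv k) h) = dm k" using cp_M[of "iv k" h] inv_props[OF kM] hM hh by simp
    moreover have "h = cp k (cp (iv k) h)" using cancl[of k h] kM hM hh by simp
    ultimately show "h \<in> cp k ` HA (dm k)" unfolding HA_def by blast
  qed
next
  show "cp k ` HA (dm k) \<subseteq> HA (cd k)"
  proof
    fix x assume "x \<in> cp k ` HA (dm k)"
    then obtain h where h: "h \<in> H" "cd h = dm k" "x = cp k h" unfolding HA_def by blast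
    have "cp k h \<in> H" using subH(3)[OF assms h(1)] h by simp
    moreover have "cd (cp k h) = cd k" using cp_M[of k h] kM subH(1)[OF h(1)] h by simp
    ultimately show "x \<in> HA (cd k)" using h unfolding HA_def by blast
  qed
qed
qed

lemma HA_card: assumes "A \<in> Ob" "B \<in> Ob" shows "card (HA A) = card (HA B)"
proof -
  obtain k where k: "k \<in> H" "dm k = A" "cd k = B" using cH assms unfolding connected_wide_def by blast
  have kM: "k \<in> M" using subH(1) k by blast
  have "inj_on (cp k) (HA A)"
  proof
    fix a b assume ab: "a \<in> HA A" "b \<in> HA A" "cp k a = cp k b"
    hence "cp (iv k) (cp k a) = cp (iv k) (cp k b)" by simp
    moreover have "a \<in> M" "b \<in> M" "cd a = A" "cd b = A" using ab subH(1) unfolding HA_def by auto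
    ultimately show "a = b" using cancl2[of k a] cancl2[of k b] kM k by simp
  qed
  then have "card (cp k ` HA A) = card (HA A)" by (rule card_image)
  then show ?thesis using HA_img[OF k(1)] k by simp
qed

lemma NN_eq: "A \<in> Ob \<Longrightarrow> card (HA A) = NN"
proof -
  assume A: "A \<in> Ob"
  have "(SOME A. A \<in> Ob) \<in> Ob" using A by (rule someI)
  then show ?thesis unfolding NN_def using HA_card A by blast
qed

lemma NN_pos: "NN > 0"
proof -
  obtain A where A: "A \<in> Ob" using Oneq by blast
  have "gi A \<in> HA A" using subH(2)[OF A] id_M[OF A] by (simp add: HA_def)
  then have "HA A \<noteq> {}" by blast
  then have "card (HA A) > 0" using HA_fin[of A] by (simp add: card_gt_0_iff)
  then show ?thesis using NN_eq[OF A] by simp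
qed

lemma dc_inv: "\<phi> \<in> double_coset_fns C H K \<Longrightarrow> h \<in> H \<Longrightarrow> g \<in> M \<Longrightarrow> k \<in> K \<Longrightarrow>
  cd h = cd g \<Longrightarrow> dm g = cd k \<Longrightarrow> \<phi> (cp (iv h) (cp g k)) = \<phi> g"
  unfolding double_coset_fns_def by blast

lemma dc_right: assumes "\<phi> \<in> double_coset_fns C H K" "g \<in> M" "k \<in> K" "dm g = cd k"
  shows "\<phi> (cp g k) = \<phi> g"
proof -
  have gk: "cp g k \<in> M" "cd (cp g k) = cd g" using cp_M subK assms by auto
  have "\<phi> (cp (iv (gi (cd g))) (cp g k)) = \<phi> g"
    using dc_inv[OF assms(1) subH(2)[OF cd_O[OF assms(2)]] assms(2,3)] id_M[OF cd_O[OF assms(2)]] assms(2-4)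
    by simp
  then show ?thesis using inv_id[OF cd_O[OF assms(2)]] idl[OF gk(1)] gk by simp
qed

lemma dc_left: assumes "\<phi> \<in> double_coset_fns C H K" "g \<in> M" "h \<in> H" "cd h = cd g"
  shows "\<phi> (cp (iv h) g) = \<phi> g"
proof -
  have "\<phi> (cp (iv h) (cp g (gi (dm g)))) = \<phi> g"
    using dc_inv[OF assms(1,3,2) subK(2)[OF dm_O[OF assms(2)]]] id_M[OF dm_O[OF assms(2)]] assms(2-4)
    by simp
  then show ?thesis using idr[OF assms(2)] by simp
qed

lemma Yobj_sum: assumes "\<forall>y\<in>S. e y \<in> Yobj C H G"
  shows "(\<lambda>m. \<Sum>y\<in>S. c y * e y m) \<in> Yobj C H G"
  using assms unfolding Yobj_def by (simp add: sum.neutral)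

lemma Yobj_lin: "f1 \<in> Yobj C H G \<Longrightarrow> f2 \<in> Yobj C H G \<Longrightarrow> (\<lambda>m. a * f1 m + f2 m) \<in> Yobj C H G"
  unfolding Yobj_def by auto

lemma Yobj_zero: "(\<lambda>m. 0) \<in> Yobj C H G"
  unfolding Yobj_def by auto

lemma delta_Y: assumes "A \<in> Ob" shows "delta A \<in> Yobj C H A"
  unfolding Yobj_def
proof (intro CollectI conjI allI ballI impI)
  fix x assume "\<not> (x \<in> M \<and> cd x = A)"
  then show "delta A x = 0" using subH(1) by (auto simp: delta_def)
next
  fix g h assume gh: "g \<in> M" "h \<in> H" "cd g = A" "dm g = cd h"
  have c: "cd (cp g h) = A" using cp_M subH gh by auto
  have "g \<in> H \<longleftrightarrow> cp g h \<in> H"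
  proof
    assume "g \<in> H" then show "cp g h \<in> H" using subH gh by auto
  next
    assume "cp g h \<in> H"
    then have "cp (cp g h) (iv h) \<in> H" using subH gh cp_M inv_props[of h] by auto
    then show "g \<in> H" using cancr[of g h] gh subH by auto
  qed
  then show "delta A (cp g h) = delta A g" using c gh by (auto simp: delta_def)
qed

lemma Ymor_Y: assumes "g \<in> M" "f \<in> Yobj C H (dm g)" shows "Ymor C g f \<in> Yobj C H (cd g)"
  unfolding Yobj_def
proof (intro CollectI conjI allI ballI impI)
  fix x assume "\<not> (x \<in> M \<and> cd x = cd g)"
  then show "Ymor C g f x = 0" by (auto simp: Ymor_def)
next
  fix x h assume xh: "x \<in> M" "h \<in> H" "cd x = cd g" "dm x = cd h"
  have hM: "h \<in> M" using subH xh by auto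
  have c: "cp x h \<in> M" "cd (cp x h) = cd g" using cp_M hM xh by auto
  have ix: "cp (iv g) x \<in> M" "cd (cp (iv g) x) = dm g" "dm (cp (iv g) x) = cd h"
    using cp_M[of "iv g" x] inv_props[of g] assms xh by auto
  have "cp (iv g) (cp x h) = cp (cp (iv g) x) h"
    using assoc[of "iv g" x h] inv_props[of g] assms xh hM by auto
  moreover have "f (cp (cp (iv g) x) h) = f (cp (iv g) x)"
    using assms(2) ix xh unfolding Yobj_def by auto
  ultimately show "Ymor C g f (cp x h) = Ymor C g f x" using c xh by (simp add: Ymor_def)
qed

lemma Ymor_delta: assumes "h \<in> H" shows "Ymor C h (delta (dm h)) = delta (cd h)"
proof
  fix x
  have hM: "h \<in> M" using subH assms by auto
  show "Ymor C h (delta (dm h)) x = delta (cd h) x"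
  proof (cases "x \<in> M \<and> cd x = cd h")
    case True
    have c: "cd (cp (iv h) x) = dm h" using cp_M[of "iv h" x] inv_props[of h] hM True by auto
    have "cp (iv h) x \<in> H \<longleftrightarrow> x \<in> H"
    proof
      assume "cp (iv h) x \<in> H"
      then have "cp h (cp (iv h) x) \<in> H" using subH assms cp_M[of "iv h" x] inv_props[of h] hM True by auto
      then show "x \<in> H" using cancl[of h x] hM True by simp
    next
      assume "x \<in> H" then show "cp (iv h) x \<in> H" using subH assms inv_props[of h] hM True by auto
    qed
    then show ?thesis using True c by (simp add: Ymor_def delta_def)
  next
    case False
    then show ?thesis using subH(1) by (auto simp: Ymor_def delta_def)
  qed
qed


lemma NT_obj: "\<eta> \<in> nat_trans C H K \<Longrightarrow> G \<notin> Ob \<Longrightarrow> \<eta> G f = (\<lambda>m. 0)"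
  unfolding nat_trans_def by blast
lemma NT_notY: "\<eta> \<in> nat_trans C H K \<Longrightarrow> G \<in> Ob \<Longrightarrow> f \<notin> Yobj C H G \<Longrightarrow> \<eta> G f = (\<lambda>m. 0)"
  unfolding nat_trans_def by blast
lemma NT_Y: "\<eta> \<in> nat_trans C H K \<Longrightarrow> G \<in> Ob \<Longrightarrow> f \<in> Yobj C H G \<Longrightarrow> \<eta> G f \<in> Yobj C K G"
  unfolding nat_trans_def by blast
lemma NT_lin: "\<eta> \<in> nat_trans C H K \<Longrightarrow> G \<in> Ob \<Longrightarrow> f1 \<in> Yobj C H G \<Longrightarrow> f2 \<in> Yobj C H G \<Longrightarrow>
   \<eta> G (\<lambda>m. a * f1 m + f2 m) = (\<lambda>m. a * \<eta> G f1 m + \<eta> G f2 m)"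
  unfolding nat_trans_def by blast
lemma NT_nat: "\<eta> \<in> nat_trans C H K \<Longrightarrow> g \<in> M \<Longrightarrow> f \<in> Yobj C H (dm g) \<Longrightarrow>
   \<eta> (cd g) (Ymor C g f) = Ymor C g (\<eta> (dm g) f)"
  unfolding nat_trans_def by blast

lemma YK_zero: "f \<in> Yobj C K G \<Longrightarrow> \<not> (x \<in> M \<and> cd x = G) \<Longrightarrow> f x = 0"
  unfolding Yobj_def by blast
lemma YK_inv: "f \<in> Yobj C K G \<Longrightarrow> g \<in> M \<Longrightarrow> k \<in> K \<Longrightarrow> cd g = G \<Longrightarrow> dm g = cd k \<Longrightarrow> f (cp g k) = f g"
  unfolding Yobj_def by blast
lemma YH_zero: "f \<in> Yobj C H G \<Longrightarrow> \<not> (x \<in> M \<and> cd x = G) \<Longrightarrow> f x = 0"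
  unfolding Yobj_def by blast
lemma YH_inv: "f \<in> Yobj C H G \<Longrightarrow> g \<in> M \<Longrightarrow> k \<in> H \<Longrightarrow> cd g = G \<Longrightarrow> dm g = cd k \<Longrightarrow> f (cp g k) = f g"
  unfolding Yobj_def by blast

lemma NT_zero: assumes "\<eta> \<in> nat_trans C H K" "G \<in> Ob" shows "\<eta> G (\<lambda>m. 0) = (\<lambda>m. 0)"
proof -
  have "\<eta> G (\<lambda>m. 1 * 0 + 0) = (\<lambda>m. 1 * \<eta> G (\<lambda>m. 0) m + \<eta> G (\<lambda>m. 0) m)"
    using NT_lin[OF assms Yobj_zero Yobj_zero] .
  then have "\<And>m. \<eta> G (\<lambda>m. 0) m = \<eta> G (\<lambda>m. 0) m + \<eta> G (\<lambda>m. 0) m"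
    by (simp add: fun_eq_iff)
  then show ?thesis by (simp add: fun_eq_iff)
qed

lemma NT_sum: assumes "\<eta> \<in> nat_trans C H K" "G \<in> Ob" "finite S"
  shows "(\<forall>y\<in>S. e y \<in> Yobj C H G) \<longrightarrow>
    \<eta> G (\<lambda>m. \<Sum>y\<in>S. c y * e y m) = (\<lambda>m. \<Sum>y\<in>S. c y * \<eta> G (e y) m)"
  using assms(3)
proof (induction S rule: finite_induct)
  case empty
  then show ?case using NT_zero[OF assms(1,2)] by simp
next
  case (insert x F)
  show ?case
  proof
    assume Y: "\<forall>y\<in>insert x F. e y \<in> Yobj C H G"
    have eq: "(\<lambda>m. \<Sum>y\<in>insert x F. c y * e y m) = (\<lambda>m. c x * e x m + (\<Sum>y\<in>F. c y * e y m))"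
      using insert by simp
    have "\<eta> G (\<lambda>m. c x * e x m + (\<Sum>y\<in>F. c y * e y m)) =
       (\<lambda>m. c x * \<eta> G (e x) m + \<eta> G (\<lambda>m. \<Sum>y\<in>F. c y * e y m) m)"
      using NT_lin[OF assms(1,2), of "e x" "\<lambda>m. \<Sum>y\<in>F. c y * e y m"] Y Yobj_sum[of F e G c] by simp
    also have "\<dots> = (\<lambda>m. c x * \<eta> G (e x) m + (\<Sum>y\<in>F. c y * \<eta> G (e y) m))"
      using insert Y by simp
    finally show "\<eta> G (\<lambda>m. \<Sum>y\<in>insert x F. c y * e y m) = (\<lambda>m. \<Sum>y\<in>insert x F. c y * \<eta> G (e y) m)"
      using eq insert by simp
  qed
qed

definition PhiT :: "('m \<Rightarrow> complex) \<Rightarrow> 'o \<Rightarrow> ('m \<Rightarrow> complex) \<Rightarrow> 'm \<Rightarrow> complex" where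
 "PhiT \<phi> G f x = (if G \<in> Ob \<and> f \<in> Yobj C H G \<and> x \<in> M \<and> cd x = G
    then (\<Sum>y\<in>{y\<in>M. cd y = G}. \<phi> (cp (iv y) x) * f y) else 0)"

definition PsiT :: "('o \<Rightarrow> ('m \<Rightarrow> complex) \<Rightarrow> ('m \<Rightarrow> complex)) \<Rightarrow> 'm \<Rightarrow> complex" where
 "PsiT \<eta> g = (if g \<in> M then \<eta> (cd g) (delta (cd g)) g / of_nat NN else 0)"

lemma MG_fin: "finite {y\<in>M. cd y = G}" using finM by simp

lemma Phi_lin: "PhiT (\<lambda>m. a * x m + y m) = (\<lambda>G f m. a * PhiT x G f m + PhiT y G f m)"
  by (intro ext) (simp add: PhiT_def distrib_right sum.distrib sum_distrib_left mult.assoc)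


lemma Phi_Y: assumes "\<phi> \<in> double_coset_fns C H K" "G \<in> Ob" "f \<in> Yobj C H G"
  shows "PhiT \<phi> G f \<in> Yobj C K G"
  unfolding Yobj_def
proof (intro CollectI conjI allI ballI impI)
  fix x assume "\<not> (x \<in> M \<and> cd x = G)"
  then show "PhiT \<phi> G f x = 0" by (auto simp: PhiT_def)
next
  fix g k assume gk: "g \<in> M" "k \<in> K" "cd g = G" "dm g = cd k"
  have kM: "k \<in> M" using subK(1) gk by blast
  have c: "cp g k \<in> M" "cd (cp g k) = G" using cp_M[OF gk(1) kM] gk by auto
  have "(\<Sum>y\<in>{y\<in>M. cd y = G}. \<phi> (cp (iv y) (cp g k)) * f y) =
        (\<Sum>y\<in>{y\<in>M. cd y = G}. \<phi> (cp (iv y) g) * f y)"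
  proof (rule sum.cong)
    fix y assume "y \<in> {y\<in>M. cd y = G}"
    then have y: "y \<in> M" "cd y = G" by auto
    have iy: "iv y \<in> M" "dm (iv y) = G" "cd (iv y) = dm y" using inv_props[OF y(1)] y by auto
    have a: "cp (iv y) (cp g k) = cp (cp (iv y) g) k" using assoc[OF iy(1) gk(1) kM] iy gk by simp
    have b: "cp (iv y) g \<in> M" "dm (cp (iv y) g) = cd k" using cp_M[OF iy(1) gk(1)] iy gk by auto
    show "\<phi> (cp (iv y) (cp g k)) * f y = \<phi> (cp (iv y) g) * f y"
      using a dc_right[OF assms(1) b(1) gk(2) b(2)] by simp
  qed simp
  then show "PhiT \<phi> G f (cp g k) = PhiT \<phi> G f g" using c gk assms by (simp add: PhiT_def)
qed

lemma Phi_natural: assumes "\<phi> \<in> double_coset_fns C H K" "g \<in> M" "f \<in> Yobj C H (dm g)"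
  shows "PhiT \<phi> (cd g) (Ymor C g f) = Ymor C g (PhiT \<phi> (dm g) f)"
proof
  fix x
  have YY: "Ymor C g f \<in> Yobj C H (cd g)" using Ymor_Y assms(2,3) .
  have ig: "iv g \<in> M" "dm (iv g) = cd g" "cd (iv g) = dm g" using inv_props[OF assms(2)] by auto
  show "PhiT \<phi> (cd g) (Ymor C g f) x = Ymor C g (PhiT \<phi> (dm g) f) x"
  proof (cases "x \<in> M \<and> cd x = cd g")
    case True
    have gx: "cp (iv g) x \<in> M" "cd (cp (iv g) x) = dm g" "dm (cp (iv g) x) = dm x"
      using cp_M[OF ig(1)] ig True by auto
    have "(\<Sum>z\<in>{y\<in>M. cd y = dm g}. \<phi> (cp (iv z) (cp (iv g) x)) * f z) =
          (\<Sum>y\<in>{y\<in>M. cd y = cd g}. \<phi> (cp (iv y) x) * Ymor C g f y)"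
    proof (rule sum.reindex_bij_witness[where i = "cp (iv g)" and j = "cp g"])
      fix z assume "z \<in> {y\<in>M. cd y = dm g}"
      then have z: "z \<in> M" "cd z = dm g" by auto
      have gz: "cp g z \<in> M" "cd (cp g z) = cd g" "dm (cp g z) = dm z" using cp_M[OF assms(2) z(1)] z by auto
      show "cp (iv g) (cp g z) = z" using cancl2[OF assms(2) z(1)] z by simp
      show "cp g z \<in> {y\<in>M. cd y = cd g}" using gz by simp
      have iz: "iv z \<in> M" "dm (iv z) = cd z" "cd (iv z) = dm z" using inv_props[OF z(1)] by auto
      have "iv (cp g z) = cp (iv z) (iv g)" using inv_comp[OF assms(2) z(1)] z by simp
      moreover have "cp (cp (iv z) (iv g)) x = cp (iv z) (cp (iv g) x)"
        using assoc[OF iz(1) ig(1)] iz ig z True by simp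
      moreover have "Ymor C g f (cp g z) = f z"
        using gz cancl2[OF assms(2) z(1)] z by (simp add: Ymor_def)
      ultimately show "\<phi> (cp (iv (cp g z)) x) * Ymor C g f (cp g z) = \<phi> (cp (iv z) (cp (iv g) x)) * f z"
        by simp
    next
      fix y assume "y \<in> {y\<in>M. cd y = cd g}"
      then have y: "y \<in> M" "cd y = cd g" by auto
      show "cp g (cp (iv g) y) = y" using cancl[OF assms(2) y(1)] y by simp
      show "cp (iv g) y \<in> {y\<in>M. cd y = dm g}" using cp_M[OF ig(1) y(1)] ig y by auto
    qed
    moreover have "PhiT \<phi> (cd g) (Ymor C g f) x = (\<Sum>y\<in>{y\<in>M. cd y = cd g}. \<phi> (cp (iv y) x) * Ymor C g f y)"
      using True YY cd_O[OF assms(2)] by (simp add: PhiT_def)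
    moreover have "Ymor C g (PhiT \<phi> (dm g) f) x = PhiT \<phi> (dm g) f (cp (iv g) x)"
      using True by (simp add: Ymor_def)
    moreover have "PhiT \<phi> (dm g) f (cp (iv g) x) = (\<Sum>z\<in>{y\<in>M. cd y = dm g}. \<phi> (cp (iv z) (cp (iv g) x)) * f z)"
      using gx assms(3) dm_O[OF assms(2)] by (simp add: PhiT_def)
    ultimately show ?thesis by simp
  next
    case False
    have "PhiT \<phi> (cd g) (Ymor C g f) x = 0" using False unfolding PhiT_def by auto
    moreover have "Ymor C g (PhiT \<phi> (dm g) f) x = 0" using False unfolding Ymor_def by auto
    ultimately show ?thesis by simp
  qed
qed

lemma Phi_nat: assumes "\<phi> \<in> double_coset_fns C H K" shows "PhiT \<phi> \<in> nat_trans C H K"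
proof -
  have P1: "\<forall>G. G \<notin> Ob \<longrightarrow> (\<forall>f. PhiT \<phi> G f = (\<lambda>m. 0))" by (simp add: PhiT_def fun_eq_iff)
  have P2: "\<forall>G\<in>Ob. (\<forall>f. f \<notin> Yobj C H G \<longrightarrow> PhiT \<phi> G f = (\<lambda>m. 0))" by (simp add: PhiT_def fun_eq_iff)
  have P3: "\<forall>G\<in>Ob. \<forall>f\<in>Yobj C H G. PhiT \<phi> G f \<in> Yobj C K G" using Phi_Y[OF assms] by blast
  have P4: "\<forall>G\<in>Ob. \<forall>a. \<forall>f1\<in>Yobj C H G. \<forall>f2\<in>Yobj C H G.
            PhiT \<phi> G (\<lambda>m. a * f1 m + f2 m) = (\<lambda>m. a * PhiT \<phi> G f1 m + PhiT \<phi> G f2 m)"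
  proof (intro ballI allI ext)
    fix G a f1 f2 m assume "G \<in> Ob" "f1 \<in> Yobj C H G" "f2 \<in> Yobj C H G"
    then show "PhiT \<phi> G (\<lambda>m. a * f1 m + f2 m) m = a * PhiT \<phi> G f1 m + PhiT \<phi> G f2 m"
      using Yobj_lin[of f1 G f2 a]
      by (simp add: PhiT_def distrib_left sum.distrib sum_distrib_left mult.left_commute)
  qed
  have P5: "\<forall>g\<in>M. \<forall>f\<in>Yobj C H (dm g). PhiT \<phi> (cd g) (Ymor C g f) = Ymor C g (PhiT \<phi> (dm g) f)"
    using Phi_natural[OF assms] by blast
  show ?thesis unfolding nat_trans_def using P1 P2 P3 P4 P5 by blast
qed


lemma Psi_Phi: assumes "\<phi> \<in> double_coset_fns C H K" shows "PsiT (PhiT \<phi>) = \<phi>"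
proof
  fix g
  show "PsiT (PhiT \<phi>) g = \<phi> g"
  proof (cases "g \<in> M")
    case False
    then show ?thesis using assms by (simp add: PsiT_def double_coset_fns_def)
  next
    case True
    define A where "A = cd g"
    have A: "A \<in> Ob" using cd_O True A_def by simp
    have "PhiT \<phi> A (delta A) g = (\<Sum>y\<in>{y\<in>M. cd y = A}. \<phi> (cp (iv y) g) * delta A y)"
      using A delta_Y[OF A] True A_def by (simp add: PhiT_def)
    also have "\<dots> = (\<Sum>y\<in>{y\<in>M. cd y = A}. if y \<in> HA A then \<phi> (cp (iv y) g) else 0)"
      by (rule sum.cong) (auto simp: delta_def HA_def)
    also have "\<dots> = (\<Sum>y\<in>{y\<in>M. cd y = A} \<inter> HA A. \<phi> (cp (iv y) g))"
      using sum.inter_restrict[OF MG_fin, of "\<lambda>y. \<phi> (cp (iv y) g)" A "HA A"] by simp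
    also have "{y\<in>M. cd y = A} \<inter> HA A = HA A" using subH(1) by (auto simp: HA_def)
    also have "(\<Sum>y\<in>HA A. \<phi> (cp (iv y) g)) = (\<Sum>y\<in>HA A. \<phi> g)"
      by (rule sum.cong) (auto simp: HA_def A_def intro: dc_left[OF assms True])
    also have "\<dots> = of_nat NN * \<phi> g" using NN_eq[OF A] by simp
    finally show ?thesis using True NN_pos A_def by (simp add: PsiT_def)
  qed
qed

lemma Psi_DC: assumes "\<eta> \<in> nat_trans C H K" shows "PsiT \<eta> \<in> double_coset_fns C H K"
  unfolding double_coset_fns_def
proof (intro CollectI conjI allI ballI impI)
  fix m assume "m \<notin> M" then show "PsiT \<eta> m = 0" by (simp add: PsiT_def)
next
  fix h g k assume a: "h \<in> H" "g \<in> M" "k \<in> K" "cd h = cd g" "dm g = cd k"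
  have hM: "h \<in> M" and kM: "k \<in> M" using a subH(1) subK(1) by auto
  have ih: "iv h \<in> M" "dm (iv h) = cd h" "cd (iv h) = dm h" using inv_props[OF hM] by auto
  have gk: "cp g k \<in> M" "cd (cp g k) = cd g" using cp_M[OF a(2) kM] a by auto
  have g': "cp (iv h) (cp g k) \<in> M" "cd (cp (iv h) (cp g k)) = dm h"
    using cp_M[OF ih(1) gk(1)] ih gk a by auto
  have B: "dm h \<in> Ob" "cd h \<in> Ob" using dm_O cd_O hM by auto
  have "\<eta> (cd h) (Ymor C h (delta (dm h))) = Ymor C h (\<eta> (dm h) (delta (dm h)))"
    using NT_nat[OF assms hM delta_Y[OF B(1)]] .
  then have "\<eta> (cd h) (delta (cd h)) = Ymor C h (\<eta> (dm h) (delta (dm h)))"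
    using Ymor_delta[OF a(1)] by simp
  then have "\<eta> (cd h) (delta (cd h)) (cp g k) = \<eta> (dm h) (delta (dm h)) (cp (iv h) (cp g k))"
    using gk a by (simp add: Ymor_def)
  moreover have "\<eta> (cd h) (delta (cd h)) (cp g k) = \<eta> (cd h) (delta (cd h)) g"
    using YK_inv[OF NT_Y[OF assms B(2) delta_Y[OF B(2)]] a(2) a(3)] a by simp
  ultimately show "PsiT \<eta> (cp (iv h) (cp g k)) = PsiT \<eta> g"
    using g' a by (simp add: PsiT_def)
qed


lemma coset_sum: assumes "f \<in> Yobj C H G" "m \<in> M" "cd m = G"
  shows "(\<Sum>y\<in>{y\<in>M. cd y = G}. f y / of_nat NN * Ymor C y (delta (dm y)) m) = f m"
proof -
  define S where "S = {y\<in>{y\<in>M. cd y = G}. cp (iv y) m \<in> H}"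
  have im: "iv m \<in> M" "dm (iv m) = cd m" "cd (iv m) = dm m" using inv_props[OF assms(2)] by auto
  have e: "Ymor C y (delta (dm y)) m = (if cp (iv y) m \<in> H then 1 else 0)" if y: "y \<in> M" "cd y = G" for y
  proof -
    have "cd (cp (iv y) m) = dm y" using cp_M[of "iv y" m] inv_props[OF y(1)] y assms by auto
    then show ?thesis using y assms by (simp add: Ymor_def delta_def)
  qed
  have "(\<Sum>y\<in>{y\<in>M. cd y = G}. f y / of_nat NN * Ymor C y (delta (dm y)) m)
      = (\<Sum>y\<in>{y\<in>M. cd y = G}. if y \<in> S then f y / of_nat NN else 0)"
    by (rule sum.cong) (auto simp: e S_def)
  also have "\<dots> = (\<Sum>y\<in>S. f y / of_nat NN)"
  proof -
    have "{y\<in>M. cd y = G} \<inter> S = S" by (auto simp: S_def)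
    then show ?thesis using sum.inter_restrict[OF MG_fin, of "\<lambda>y. f y / of_nat NN" G S] by simp
  qed
  also have "S = cp m ` HA (dm m)"
  proof
    show "S \<subseteq> cp m ` HA (dm m)"
    proof
      fix y assume "y \<in> S"
      then have y: "y \<in> M" "cd y = G" "cp (iv y) m \<in> H" by (auto simp: S_def)
      have iy: "iv y \<in> M" "dm (iv y) = cd y" "cd (iv y) = dm y" using inv_props[OF y(1)] by auto
      have "iv (cp (iv y) m) = cp (iv m) (iv (iv y))" using inv_comp[OF iy(1) assms(2)] iy y assms by simp
      then have "cp (iv m) y \<in> H" using subH(4)[OF y(3)] inv_inv[OF y(1)] by simp
      moreover have "cd (cp (iv m) y) = dm m" using cp_M[OF im(1) y(1)] im y assms by simp
      moreover have "y = cp m (cp (iv m) y)" using cancl[OF assms(2) y(1)] y assms by simp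
      ultimately show "y \<in> cp m ` HA (dm m)" unfolding HA_def by blast
    qed
  next
    show "cp m ` HA (dm m) \<subseteq> S"
    proof
      fix y assume "y \<in> cp m ` HA (dm m)"
      then obtain h where h: "h \<in> H" "cd h = dm m" "y = cp m h" unfolding HA_def by blast
      have hM: "h \<in> M" using subH(1) h by blast
      have ih: "iv h \<in> M" "dm (iv h) = cd h" "cd (iv h) = dm h" using inv_props[OF hM] by auto
      have mh: "cp m h \<in> M" "cd (cp m h) = G" using cp_M[OF assms(2) hM] h assms by auto
      have "cp (iv (cp m h)) m = cp (cp (iv h) (iv m)) m" using inv_comp[OF assms(2) hM] h by simp
      also have "\<dots> = cp (iv h) (cp (iv m) m)" using assoc[OF ih(1) im(1) assms(2)] ih im h by simp
      also have "\<dots> = cp (iv h) (gi (dm (iv h)))" using inv_props[OF assms(2)] ih h by simp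
      also have "\<dots> = iv h" using idr[OF ih(1)] .
      finally have "cp (iv (cp m h)) m \<in> H" using subH(4)[OF h(1)] by simp
      then show "y \<in> S" using mh h by (simp add: S_def)
    qed
  qed
  also have "(\<Sum>y\<in>cp m ` HA (dm m). f y / of_nat NN) = (\<Sum>h\<in>HA (dm m). f (cp m h) / of_nat NN)"
  proof (rule sum.reindex[unfolded comp_def])
    show "inj_on (cp m) (HA (dm m))"
    proof
      fix a b assume ab: "a \<in> HA (dm m)" "b \<in> HA (dm m)" "cp m a = cp m b"
      hence "cp (iv m) (cp m a) = cp (iv m) (cp m b)" by simp
      moreover have "a \<in> M" "b \<in> M" "cd a = dm m" "cd b = dm m" using ab subH(1) unfolding HA_def by auto
      ultimately show "a = b" using cancl2[OF assms(2), of a] cancl2[OF assms(2), of b] by simp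
    qed
  qed
  also have "\<dots> = (\<Sum>h\<in>HA (dm m). f m / of_nat NN)"
  proof (rule sum.cong)
    fix h assume "h \<in> HA (dm m)"
    then have "h \<in> H" "cd h = dm m" by (auto simp: HA_def)
    then show "f (cp m h) / of_nat NN = f m / of_nat NN" using YH_inv[OF assms(1,2)] assms by simp
  qed simp
  also have "\<dots> = f m" using NN_eq[OF dm_O[OF assms(2)]] NN_pos by simp
  finally show ?thesis .
qed

lemma Phi_Psi: assumes "\<eta> \<in> nat_trans C H K" shows "PhiT (PsiT \<eta>) = \<eta>"
proof (intro ext)
  fix G f x
  show "PhiT (PsiT \<eta>) G f x = \<eta> G f x"
  proof (cases "G \<in> Ob \<and> f \<in> Yobj C H G \<and> x \<in> M \<and> cd x = G")
    case False
    then consider "G \<notin> Ob" | "G \<in> Ob" "f \<notin> Yobj C H G" | "G \<in> Ob" "f \<in> Yobj C H G" "\<not> (x \<in> M \<and> cd x = G)"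
      by blast
    then show ?thesis
    proof cases
      case 1 then show ?thesis using NT_obj[OF assms] by (simp add: PhiT_def)
    next
      case 2 then show ?thesis using NT_notY[OF assms] by (simp add: PhiT_def)
    next
      case 3 then show ?thesis using YK_zero[OF NT_Y[OF assms 3(1,2)]] unfolding PhiT_def by auto
    qed
  next
    case True
    then have G: "G \<in> Ob" and fY: "f \<in> Yobj C H G" and x: "x \<in> M" "cd x = G" by auto
    define e where "e y = Ymor C y (delta (dm y))" for y
    have eY: "\<forall>y\<in>{y\<in>M. cd y = G}. e y \<in> Yobj C H G"
      using Ymor_Y delta_Y dm_O by (auto simp: e_def)
    have "PhiT (PsiT \<eta>) G f x = (\<Sum>y\<in>{y\<in>M. cd y = G}. PsiT \<eta> (cp (iv y) x) * f y)"
      using True by (simp add: PhiT_def)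
    also have "\<dots> = (\<Sum>y\<in>{y\<in>M. cd y = G}. f y / of_nat NN * \<eta> G (e y) x)"
    proof (rule sum.cong)
      fix y assume "y \<in> {y\<in>M. cd y = G}"
      then have y: "y \<in> M" "cd y = G" by auto
      have yx: "cp (iv y) x \<in> M" "cd (cp (iv y) x) = dm y"
        using cp_M[of "iv y" x] inv_props[OF y(1)] y x by auto
      have "\<eta> G (e y) = Ymor C y (\<eta> (dm y) (delta (dm y)))"
        using NT_nat[OF assms y(1) delta_Y[OF dm_O[OF y(1)]]] y by (simp add: e_def)
      then have "\<eta> G (e y) x = \<eta> (dm y) (delta (dm y)) (cp (iv y) x)"
        using x y by (simp add: Ymor_def)
      then show "PsiT \<eta> (cp (iv y) x) * f y = f y / of_nat NN * \<eta> G (e y) x"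
        using yx by (simp add: PsiT_def)
    qed simp
    also have "\<dots> = \<eta> G (\<lambda>m. \<Sum>y\<in>{y\<in>M. cd y = G}. f y / of_nat NN * e y m) x"
      using NT_sum[OF assms G MG_fin, where e=e and c="\<lambda>y. f y / of_nat NN"] eY by simp
    also have "(\<lambda>m. \<Sum>y\<in>{y\<in>M. cd y = G}. f y / of_nat NN * e y m) = f"
    proof
      fix m
      show "(\<Sum>y\<in>{y\<in>M. cd y = G}. f y / of_nat NN * e y m) = f m"
      proof (cases "m \<in> M \<and> cd m = G")
        case True
        then show ?thesis using coset_sum[OF fY] by (simp add: e_def)
      next
        case False
        have "e y m = 0" if "y \<in> {y\<in>M. cd y = G}" for y
          using False that unfolding e_def Ymor_def by auto
        then show ?thesis using YH_zero[OF fY False] by simp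
      qed
    qed
    finally show ?thesis .
  qed
qed

lemma main: "\<exists>\<Phi>. bij_betw \<Phi> (double_coset_fns C H K) (nat_trans C H K) \<and>
    (\<forall>a. \<forall>x\<in>double_coset_fns C H K. \<forall>y\<in>double_coset_fns C H K.
       \<Phi> (\<lambda>m. a * x m + y m) = (\<lambda>G f m. a * \<Phi> x G f m + \<Phi> y G f m))"
proof (intro exI conjI)
  show "bij_betw PhiT (double_coset_fns C H K) (nat_trans C H K)"
    by (rule bij_betw_byWitness[where f' = PsiT])
       (use Psi_Phi Phi_Psi Phi_nat Psi_DC in auto)
  show "\<forall>a. \<forall>x\<in>double_coset_fns C H K. \<forall>y\<in>double_coset_fns C H K.
       PhiT (\<lambda>m. a * x m + y m) = (\<lambda>G f m. a * PhiT x G f m + PhiT y G f m)"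
    using Phi_lin by blast
qed

end

theorem theorem5p4:
  fixes C :: "('o, 'm) groupoid" and H K :: "'m set"
  assumes "is_finite_groupoid C"
    and "wide_subgroupoid C H" and "connected_wide C H"
    and "wide_subgroupoid C K" and "connected_wide C K"
  shows "\<exists>\<Phi>. bij_betw \<Phi> (double_coset_fns C H K) (nat_trans C H K) \<and>
    (\<forall>a. \<forall>x\<in>double_coset_fns C H K. \<forall>y\<in>double_coset_fns C H K.
       \<Phi> (\<lambda>m. a * x m + y m) = (\<lambda>G f m. a * \<Phi> x G f m + \<Phi> y G f m))"
proof -
  interpret GG C H K using assms by unfold_locales
  show ?thesis by (rule main)
qed

end
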